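(* Let $m>2$ be an integer and let $K$ be a field whose characteristic does not divide $m$ and which contains the $m$-th roots of unity. Let $a\in K^*$ be an element that is not an $m$-th power in $K$, and let $b\in K^*$. Then every $K$-rational automorphism $\psi$ of $\mathbb{P}^1_K$ that maps the set of roots in $\bar K$ of $x^m-a$ onto the set of roots in $\bar K$ of $x^m-b$ is of the form $x\mapsto cx$ or $x\mapsto c/x$ for some nonzero $c\in K$. *)

theory Defs
  imports "HOL-Algebra.Algebraic_Closure_Type"
begin

text \<open>The projective line over a field: None is the point at infinity,
  Some x is the affine point x.\<close>
type_synonym 'a proj_line = "'a option"

text \<open>The K-rational automorphism of the projective line given by the matrix
  with rows (al, be) and (ga, de), entries in K, i.e. x maps to (al x + be)/(ga x + de),
  acting on the K-bar-points of the projective line (K-bar = algebraic closure).\<close>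
definition mobius :: "'k::field \<Rightarrow> 'k \<Rightarrow> 'k \<Rightarrow> 'k \<Rightarrow> 'k alg_closure proj_line \<Rightarrow> 'k alg_closure proj_line" where
  "mobius al be ga de p =
     (case p of
        None \<Rightarrow> (if ga = 0 then None else Some (to_ac al / to_ac ga))
      | Some x \<Rightarrow> (if to_ac ga * x + to_ac de = 0 then None
                   else Some ((to_ac al * x + to_ac be) / (to_ac ga * x + to_ac de))))"

end

theory Submission
  imports Defs
begin

lemma rou_ne1:
  fixes n :: nat
  assumes "n \<ge> 2" "(of_nat n :: 'a :: alg_closed_field) \<noteq> 0"
  shows "\<exists>w::'a. w ^ n = 1 \<and> w \<noteq> 1"
proof -
  have "\<exists>x::'a. (\<Sum>k\<le>n-1. (\<lambda>_. 1) k * x ^ k) = 0"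
    by (rule alg_closed) (use assms in auto)
  then obtain x :: 'a where x: "(\<Sum>k\<le>n-1. x ^ k) = 0" by auto
  have e: "{..n-1} = {..<n}" using assms by auto
  have s: "(\<Sum>k<n. x ^ k) = 0" using x e by simp
  have "x ^ n - 1 = (x - 1) * (\<Sum>i<n. x^i)" by (rule power_diff_1_eq)
  then have "x ^ n = 1" using s by simp
  moreover have "x \<noteq> 1"
  proof
    assume "x = 1" then have "(\<Sum>k<n. x ^ k) = of_nat n" by simp
    then show False using s assms by simp
  qed
  ultimately show ?thesis by blast
qed

lemma rou_ne_pm1:
  fixes m :: nat
  assumes "m \<ge> 3" "(of_nat m :: 'a :: alg_closed_field) \<noteq> 0"
  shows "\<exists>w::'a. w ^ m = 1 \<and> w \<noteq> 1 \<and> w \<noteq> -1"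
proof (cases "even m")
  case True
  then obtain k where k: "m = 2 * k" by blast
  have "k \<ge> 2" using k assms by simp
  moreover have "(of_nat k :: 'a) \<noteq> 0" using assms(2) k by simp
  ultimately obtain w :: 'a where w: "w ^ k = 1" "w \<noteq> 1" using rou_ne1 by blast
  obtain t :: 'a where t: "t ^ 2 = w" using nth_root_exists[of 2 w] by auto
  have "t ^ m = 1" using k t w by (simp add: power_mult)
  moreover have "t \<noteq> 1" using t w by auto
  moreover have "t \<noteq> -1" using t w by auto
  ultimately show ?thesis by blast
next
  case False
  obtain w :: 'a where w: "w ^ m = 1" "w \<noteq> 1" using rou_ne1[of m] assms by auto
  have "w \<noteq> -1"
  proof
    assume "w = -1"
    then have "(-1::'a) ^ m = 1" using w by simp
    then have "(-1::'a) = 1" using False by simp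
    then show False using w \<open>w = -1\<close> by simp
  qed
  then show ?thesis using w by blast
qed

lemma lin_indep:
  assumes "x \<notin> range to_ac" "to_ac u * x + to_ac v = 0"
  shows "u = 0 \<and> v = 0"
proof (cases "u = 0")
  case True then show ?thesis using assms by simp
next
  case False
  then have "x = to_ac (- v / u)" using assms(2) by (simp add: field_simps eq_neg_iff_add_eq_0)
  then show ?thesis using assms(1) by blast
qed

lemma three_pts:
  fixes c2 c1 c0 :: "'a::field"
  assumes "\<And>y. y \<in> {y1,y2,y3} \<Longrightarrow> c2 * y^2 + c1 * y + c0 = 0"
    and "y1 \<noteq> y2" "y1 \<noteq> y3" "y2 \<noteq> y3"
  shows "c2 = 0 \<and> c1 = 0 \<and> c0 = 0"
proof -
  have e1: "c2 * y1^2 + c1 * y1 + c0 = 0" "c2 * y2^2 + c1 * y2 + c0 = 0" "c2 * y3^2 + c1 * y3 + c0 = 0"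
    using assms(1) by auto
  have "(y1 - y2) * (c2 * (y1 + y2) + c1) = (c2 * y1^2 + c1 * y1 + c0) - (c2 * y2^2 + c1 * y2 + c0)"
    by (simp add: algebra_simps power2_eq_square)
  then have "(y1 - y2) * (c2 * (y1 + y2) + c1) = 0" using e1 by simp
  then have a: "c2 * (y1 + y2) + c1 = 0" using assms by simp
  have "(y1 - y3) * (c2 * (y1 + y3) + c1) = (c2 * y1^2 + c1 * y1 + c0) - (c2 * y3^2 + c1 * y3 + c0)"
    by (simp add: algebra_simps power2_eq_square)
  then have "(y1 - y3) * (c2 * (y1 + y3) + c1) = 0" using e1 by simp
  then have b: "c2 * (y1 + y3) + c1 = 0" using assms by simp
  have "c2 * (y2 - y3) = (c2 * (y1 + y2) + c1) - (c2 * (y1 + y3) + c1)" by (simp add: algebra_simps)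
  then have "c2 * (y2 - y3) = 0" using a b by simp
  then have "c2 = 0" using assms by simp
  then show ?thesis using a e1 by simp
qed

lemma conj_root:
  fixes a :: "'k::field" and t0 :: "'k alg_closure"
  assumes m3: "m \<ge> 3" and mK: "(of_nat m :: 'k) \<noteq> 0"
    and t0: "t0 ^ m = to_ac a" and t0nK: "t0 \<notin> range to_ac" and t0nz: "t0 \<noteq> 0"
  shows "\<exists>r. r ^ m = to_ac a \<and> r \<noteq> t0 \<and> (\<forall>e0 e1 e2. to_ac e2 * t0^2 + to_ac e1 * t0 + to_ac e0 = 0
            \<longrightarrow> to_ac e2 * r^2 + to_ac e1 * r + to_ac e0 = 0)"
proof (cases "\<forall>e0 e1 e2. to_ac e2 * t0^2 + to_ac e1 * t0 + to_ac e0 = 0 \<longrightarrow> e0 = 0 \<and> e1 = 0 \<and> e2 = 0")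
  case True
  have mL: "(of_nat m :: 'k alg_closure) \<noteq> 0" by (metis mK to_ac_of_nat to_ac_eq_0_iff)
  obtain th :: "'k alg_closure" where th: "th ^ m = 1" "th \<noteq> 1" using rou_ne_pm1[OF m3 mL] by blast
  have "(th * t0) ^ m = to_ac a" using th t0 by (simp add: power_mult_distrib)
  moreover have "th * t0 \<noteq> t0" using th t0nz by simp
  moreover have "\<forall>e0 e1 e2. to_ac e2 * t0^2 + to_ac e1 * t0 + to_ac e0 = 0
            \<longrightarrow> to_ac e2 * (th * t0)^2 + to_ac e1 * (th * t0) + to_ac e0 = 0"
  proof (intro allI impI)
    fix e0 e1 e2 assume "to_ac e2 * t0^2 + to_ac e1 * t0 + to_ac e0 = 0"
    then have "e0 = 0 \<and> e1 = 0 \<and> e2 = 0" using True by blast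
    then show "to_ac e2 * (th * t0)^2 + to_ac e1 * (th * t0) + to_ac e0 = 0" by simp
  qed
  ultimately show ?thesis by blast
next
  case False
  then obtain e0 e1 e2 where E: "to_ac e2 * t0^2 + to_ac e1 * t0 + to_ac e0 = 0"
    and nz: "\<not> (e0 = 0 \<and> e1 = 0 \<and> e2 = 0)" by blast
  have e2: "e2 \<noteq> 0"
  proof
    assume "e2 = 0"
    then have "to_ac e1 * t0 + to_ac e0 = 0" using E by simp
    then show False using lin_indep[OF t0nK] nz \<open>e2 = 0\<close> by blast
  qed
  define P where "P = - e1 / e2"
  define Sc where "Sc = - e0 / e2"
  have quad: "t0^2 = to_ac P * t0 + to_ac Sc"
  proof -
    have "to_ac e2 * (t0^2 - (to_ac P * t0 + to_ac Sc)) = to_ac e2 * t0^2 + to_ac e1 * t0 + to_ac e0"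
      using e2 by (simp add: P_def Sc_def field_simps)
    then show ?thesis using E e2 by simp
  qed
  define r where "r = to_ac P - t0"
  have rquad: "r^2 = to_ac P * r + to_ac Sc"
    using quad by (simp add: r_def power2_eq_square algebra_simps)
  have CP: "to_ac f2 * r^2 + to_ac f1 * r + to_ac f0 = 0"
    if F: "to_ac f2 * t0^2 + to_ac f1 * t0 + to_ac f0 = 0" for f0 f1 f2
  proof -
    have "to_ac (f2 * P + f1) * t0 + to_ac (f2 * Sc + f0) = 0"
      using F quad by (simp add: algebra_simps)
    then have z: "f2 * P + f1 = 0" "f2 * Sc + f0 = 0" using lin_indep[OF t0nK] by blast+
    have "to_ac f2 * r^2 + to_ac f1 * r + to_ac f0 = to_ac (f2 * P + f1) * r + to_ac (f2 * Sc + f0)"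
      using rquad by (simp add: algebra_simps)
    then show ?thesis using z by simp
  qed
  have pw: "\<exists>u v. t0^k = to_ac u * t0 + to_ac v \<and> r^k = to_ac u * r + to_ac v" for k
  proof (induction k)
    case 0
    show ?case by (rule exI[of _ 0], rule exI[of _ 1]) simp
  next
    case (Suc k)
    then obtain u v where uv: "t0^k = to_ac u * t0 + to_ac v" "r^k = to_ac u * r + to_ac v" by blast
    have "t0^Suc k = to_ac (u * P + v) * t0 + to_ac (u * Sc)"
    proof -
      have "t0^Suc k = to_ac u * t0^2 + to_ac v * t0" using uv by (simp add: algebra_simps power2_eq_square)
      also have "\<dots> = to_ac (u * P + v) * t0 + to_ac (u * Sc)" using quad by (simp add: algebra_simps)
      finally show ?thesis .
    qed
    moreover have "r^Suc k = to_ac (u * P + v) * r + to_ac (u * Sc)"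
    proof -
      have "r^Suc k = to_ac u * r^2 + to_ac v * r" using uv by (simp add: algebra_simps power2_eq_square)
      also have "\<dots> = to_ac (u * P + v) * r + to_ac (u * Sc)" using rquad by (simp add: algebra_simps)
      finally show ?thesis .
    qed
    ultimately show ?case by blast
  qed
  obtain u v where uv: "t0^m = to_ac u * t0 + to_ac v" "r^m = to_ac u * r + to_ac v" using pw by blast
  have "to_ac u * t0 + to_ac (v - a) = 0" using uv(1) t0 by simp
  then have "u = 0 \<and> v - a = 0" using lin_indep[OF t0nK] by blast
  then have rm: "r^m = to_ac a" using uv(2) by simp
  have rt: "r \<noteq> t0"
  proof
    assume rt0: "r = t0"
    then have P2: "to_ac P = 2 * t0" by (simp add: r_def algebra_simps)
    show False
    proof (cases "(2::'k) = 0")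
      case False
      then have "(2::'k alg_closure) \<noteq> 0" by (metis to_ac_numeral to_ac_eq_0_iff)
      then have "t0 = to_ac (P / 2)" using P2 by (simp add: field_simps)
      then show False using t0nK by blast
    next
      case True
      then have "(2::'k alg_closure) = 0" by (metis to_ac_numeral to_ac_0)
      then have "to_ac P = 0" using P2 by simp
      then have sq: "t0^2 = to_ac Sc" using quad by simp
      have "odd m"
      proof
        assume "even m"
        then obtain k where "m = 2 * k" by blast
        then have "(of_nat m :: 'k) = 2 * of_nat k" by simp
        then show False using mK True by simp
      qed
      then obtain k where k: "m = Suc (2 * k)" using oddE by (metis Suc_eq_plus1)
      have "t0^m = t0 * (t0^2)^k" using k by (simp add: power_mult)
      then have eq: "t0 * to_ac (Sc ^ k) = to_ac a" using t0 sq by simp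
      have "to_ac (Sc ^ k) \<noteq> 0" using eq t0 t0nz \<open>m \<ge> 3\<close> by (metis mult_zero_right power_not_zero zero_neq_numeral) 
      then have "t0 = to_ac (a / Sc ^ k)" using eq by (simp add: field_simps)
      then show False using t0nK by blast
    qed
  qed
  show ?thesis using rm rt CP by blast
qed

theorem lemma4p2:
  fixes m :: nat and a b al be ga de :: "'k::field"
  assumes "m > 2"
    and "\<not> CHAR('k) dvd m"
    and "\<forall>z::'k alg_closure. z ^ m = 1 \<longrightarrow> z \<in> range to_ac"
    and "a \<noteq> 0" and "\<not> (\<exists>y::'k. y ^ m = a)"
    and "b \<noteq> 0"
    and "al * de - be * ga \<noteq> 0"
    and "mobius al be ga de ` (Some ` {z. z ^ m = to_ac a}) = Some ` {z. z ^ m = to_ac b}"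
  shows "\<exists>c::'k. c \<noteq> 0 \<and> (mobius al be ga de = mobius c 0 0 1 \<or> mobius al be ga de = mobius 0 c 1 0)"
proof -
  define Al where "Al = to_ac al"
  define Be where "Be = to_ac be"
  define Ga where "Ga = to_ac ga"
  define De where "De = to_ac de"
  define A where "A = to_ac a"
  define B where "B = to_ac b"
  have m3: "m \<ge> 3" using assms(1) by simp
  have mK: "(of_nat m :: 'k) \<noteq> 0" using assms(2) by (simp add: of_nat_eq_0_iff_char_dvd)
  have mL: "(of_nat m :: 'k alg_closure) \<noteq> 0" by (metis mK to_ac_of_nat to_ac_eq_0_iff)
  have roots: "\<And>z::'k alg_closure. z^m = 1 \<Longrightarrow> z \<in> range to_ac" using assms(3) by blast
  define Psi where "Psi z = (Al*z+Be)/(Ga*z+De)" for z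
  have img: "Ga*z + De \<noteq> 0 \<and> (Psi z)^m = B" if z: "z^m = A" for z
  proof -
    have "mobius al be ga de (Some z) \<in> Some ` {z. z^m = to_ac b}" using assms(8) z A_def by blast
    then show ?thesis by (auto simp: mobius_def Al_def Be_def Ga_def De_def Psi_def B_def split: if_splits)
  qed
  have Bnz: "B \<noteq> 0" using assms(6) B_def by simp
  have Anz: "A \<noteq> 0" using assms(4) A_def by simp
  have Psinz: "Psi z \<noteq> 0" if "z^m = A" for z
    using img[OF that] Bnz m3 by (metis power_0_left not_numeral_le_zero gr0I)
  obtain t0 where t0: "t0^m = A" using nth_root_exists[of m A] m3 by auto
  have t0nz: "t0 \<noteq> 0" using t0 Anz m3 by (metis power_0_left not_numeral_le_zero gr0I)
  have t0nK: "t0 \<notin> range to_ac"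
  proof
    assume "t0 \<in> range to_ac"
    then obtain y where "t0 = to_ac y" by blast
    then have "to_ac (y^m) = to_ac a" using t0 A_def by (simp del: to_ac_power add: to_ac_power[symmetric])
    then have "y^m = a" by (simp only: to_ac_eq_iff)
    then show False using assms(5) by blast
  qed
  obtain r where r: "r^m = A" "r \<noteq> t0" and CP: "\<And>e0 e1 e2. to_ac e2 * t0^2 + to_ac e1 * t0 + to_ac e0 = 0
            \<Longrightarrow> to_ac e2 * r^2 + to_ac e1 * r + to_ac e0 = 0"
    using conj_root[OF m3 mK t0[unfolded A_def] t0nK t0nz] A_def by blast
  define eta where "eta = r / t0"
  have eta: "eta^m = 1" "eta \<noteq> 1" "eta * t0 = r" "eta \<noteq> 0"
    using r t0 t0nz Anz m3 by (auto simp: eta_def power_divide)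
  define zeta where "zeta = Psi r / Psi t0"
  have key: "Psi (th * r) = zeta * Psi (th * t0)" if th: "th^m = 1" for th
  proof -
    have S1: "(th*t0)^m = A" using th t0 by (simp add: power_mult_distrib)
    have S2: "(th*r)^m = A" using th r by (simp add: power_mult_distrib)
    define rho where "rho = Psi (th*t0) / Psi t0"
    have "rho^m = 1" using img[OF S1] img[OF t0] Bnz by (simp add: rho_def power_divide)
    then obtain rk where rk: "rho = to_ac rk" using roots by blast
    obtain thk where thk: "th = to_ac thk" using roots th by blast
    have d1: "Ga*(th*t0) + De \<noteq> 0" "Ga*t0+De \<noteq> 0" using img[OF S1] img[OF t0] by auto
    have d2: "Ga*(th*r) + De \<noteq> 0" "Ga*r+De \<noteq> 0" using img[OF S2] img[OF r(1)] by auto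
    have "Psi (th*t0) = rho * Psi t0" using Psinz[OF t0] by (simp add: rho_def)
    then have "(Al*(th*t0)+Be)*(Ga*t0+De) = rho * ((Al*t0+Be)*(Ga*(th*t0)+De))"
      using d1 by (simp add: Psi_def field_simps)
    then have "to_ac (al*thk*ga - rk*al*ga*thk) * t0^2 + to_ac (al*thk*de + be*ga - rk*(al*de + be*ga*thk)) * t0
        + to_ac (be*de - rk*be*de) = 0"
      by (simp add: Al_def Be_def Ga_def De_def rk thk algebra_simps power2_eq_square)
    then have "to_ac (al*thk*ga - rk*al*ga*thk) * r^2 + to_ac (al*thk*de + be*ga - rk*(al*de + be*ga*thk)) * r
        + to_ac (be*de - rk*be*de) = 0" by (rule CP)
    then have "(Al*(th*r)+Be)*(Ga*r+De) = rho * ((Al*r+Be)*(Ga*(th*r)+De))"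
      by (simp add: Al_def Be_def Ga_def De_def rk thk algebra_simps power2_eq_square)
    then have "Psi (th*r) = rho * Psi r" using d2 by (simp add: Psi_def field_simps)
    also have "\<dots> = zeta * Psi (th * t0)" using Psinz[OF t0] by (simp add: rho_def zeta_def)
    finally show ?thesis .
  qed
  have rel: "(Al*Ga*eta*(1-zeta)) * y^2 + (Al*eta*De + Be*Ga - zeta*(Al*De + Be*Ga*eta)) * y + Be*De*(1-zeta) = 0"
    if ph: "ph^m = 1" and y: "y = ph * t0" for ph y
  proof -
    have S1: "(ph*t0)^m = A" using ph t0 by (simp add: power_mult_distrib)
    have S2: "(ph*r)^m = A" using ph r by (simp add: power_mult_distrib)
    have d1: "Ga*(ph*t0) + De \<noteq> 0" "Ga*(ph*r) + De \<noteq> 0" using img[OF S1] img[OF S2] by auto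
    have "Psi (ph * r) = zeta * Psi (ph * t0)" by (rule key[OF ph])
    then have "(Al*(ph*r)+Be)*(Ga*(ph*t0)+De) = zeta * ((Al*(ph*t0)+Be)*(Ga*(ph*r)+De))"
      using d1 by (simp add: Psi_def field_simps)
    moreover have "ph * r = eta * y" using eta(3) y by (simp add: algebra_simps flip: eta(3))
    ultimately have h: "(Al*(eta*y)+Be)*(Ga*y+De) = zeta * ((Al*y+Be)*(Ga*(eta*y)+De))" using y by simp
    have "(Al*Ga*eta*(1-zeta)) * y^2 + (Al*eta*De + Be*Ga - zeta*(Al*De + Be*Ga*eta)) * y + Be*De*(1-zeta)
          = (Al*(eta*y)+Be)*(Ga*y+De) - zeta * ((Al*y+Be)*(Ga*(eta*y)+De))"
      by (simp add: algebra_simps power2_eq_square)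
    then show ?thesis using h by simp
  qed
  obtain ph3 where ph3: "ph3^m = 1" "ph3 \<noteq> 1" "ph3 \<noteq> eta"
  proof (cases "eta^2 = 1")
    case False
    show ?thesis
    proof (rule that[of "eta^2"])
      have "(eta^2)^m = (eta^m)^2" by (simp flip: power_mult add: mult.commute)
      then show "(eta^2)^m = 1" using eta by simp
      show "eta^2 \<noteq> 1" by fact
      show "eta^2 \<noteq> eta" using eta by (simp add: power2_eq_square)
    qed
  next
    case True
    then have "(eta - 1) * (eta + 1) = 0" by (simp add: algebra_simps power2_eq_square)
    then have "eta = -1" using eta(2) by (simp add: eq_neg_iff_add_eq_0)
    obtain th :: "'k alg_closure" where th: "th ^ m = 1" "th \<noteq> 1" "th \<noteq> -1" using rou_ne_pm1[OF m3 mL] by blast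
    show ?thesis using that[of th] th \<open>eta = -1\<close> by blast
  qed
  have coef: "Al*Ga*eta*(1-zeta) = 0 \<and> (Al*eta*De + Be*Ga - zeta*(Al*De + Be*Ga*eta)) = 0 \<and> Be*De*(1-zeta) = 0"
  proof (rule three_pts[of t0 r "ph3 * t0"])
    fix y assume "y \<in> {t0, r, ph3 * t0}"
    then consider "y = 1 * t0" | "y = eta * t0" | "y = ph3 * t0" using eta(3) by auto
    then show "(Al*Ga*eta*(1-zeta)) * y^2 + (Al*eta*De + Be*Ga - zeta*(Al*De + Be*Ga*eta)) * y + Be*De*(1-zeta) = 0"
    proof cases
      case 1 show ?thesis by (rule rel[of 1]) (simp_all add: 1)
    next
      case 2 show ?thesis by (rule rel[of eta]) (simp_all add: 2 eta(1))
    next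
      case 3 show ?thesis by (rule rel[of ph3]) (simp_all add: 3 ph3(1))
    qed
  next
    show "t0 \<noteq> r" using r by simp
    show "t0 \<noteq> ph3 * t0" using ph3 t0nz by simp
    show "r \<noteq> ph3 * t0" using ph3 t0nz eta(3) by auto
  qed
  have det: "Al*De - Be*Ga \<noteq> 0" using assms(7) by (simp add: Al_def Be_def Ga_def De_def flip: to_ac_mult to_ac_diff)
  have z1: "zeta \<noteq> 1"
  proof
    assume "zeta = 1"
    then have "(eta - 1) * (Al*De - Be*Ga) = 0" using coef by (simp add: algebra_simps)
    then show False using det eta(2) by simp
  qed
  have "Al*Ga = 0" "Be*De = 0" using coef z1 eta(4) by auto
  then have AG: "al*ga = 0" and BD: "be*de = 0" by (simp_all add: Al_def Be_def Ga_def De_def flip: to_ac_mult)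
  show ?thesis
  proof (cases "ga = 0")
    case True
    then have de: "de \<noteq> 0" "be = 0" "al \<noteq> 0" using assms(7) BD by auto
    have "mobius al be ga de = mobius (al/de) 0 0 1"
    proof
      fix p show "mobius al be ga de p = mobius (al/de) 0 0 1 p"
        using True de by (cases p) (auto simp: mobius_def field_simps)
    qed
    moreover have "al / de \<noteq> 0" using de by simp
    ultimately show ?thesis by blast
  next
    case False
    then have de: "al = 0" "be \<noteq> 0" "de = 0" using assms(7) AG BD by auto
    have "mobius al be ga de = mobius 0 (be/ga) 1 0"
    proof
      fix p show "mobius al be ga de p = mobius 0 (be/ga) 1 0 p"
        using False de by (cases p) (auto simp: mobius_def field_simps)
    qed
    moreover have "be / ga \<noteq> 0" using de False by simp
    ultimately show ?thesis by blast
  qed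
qed

end
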